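(* Let $f:\mathbb{R}^n\to(-\infty,\infty]$ be a function, let $(\bar x,\bar x^* )\in\operatorname{gph}\partial f$, let $g:\mathbb{R}^n\to\mathbb{R}$ be twice continuously differentiable and put $h:=f+g$. Let \[\bar A=\begin{pmatrix} I&0\\ \nabla^2 g(\bar x)& I\end{pmatrix}\in\mathbb{R}^{2n\times 2n}.\] Then, writing $\bar y^*:=\bar x^*+\nabla g(\bar x)$, \begin{align*} &T^h_{\operatorname{gph}\partial h}(\bar x,\bar y^* )=\bar A\,T^f_{\operatorname{gph}\partial f}(\bar x,\bar x^* ),\\ &\widehat N^h_{\operatorname{gph}\partial h}(\bar x,\bar y^* )=\bar A^{-T}\widehat N^f_{\operatorname{gph}\partial f}(\bar x,\bar x^* ),\qquad N^h_{\operatorname{gph}\partial h}(\bar x,\bar y^* )=\bar A^{-T} N^f_{\operatorname{gph}\partial f}(\bar x,\bar x^* ),\\ &\operatorname{gph} D_h(\partial h)(\bar x,\bar y^* )=\bar A\,\operatorname{gph} D_f(\partial f)(\bar x,\bar x^* ),\\ &\operatorname{gph} \widehat D^*_h(\partial h)(\bar x,\bar y^* )=\bar A\,\operatorname{gph} \widehat D^*_f(\partial f)(\bar x,\bar x^* ),\qquad \operatorname{gph} D^*_h(\partial h)(\bar x,\bar y^* )=\bar A\,\operatorname{gph} D^*_f(\partial f)(\bar x,\bar x^* ),\\ &\mathcal{S}_h(\partial h)(\bar x,\bar y^* )=\{\bar A L\mid L\in \mathcal{S}_f(\partial f)(\bar x,\bar x^* )\},\qquad \mathcal{S}^*_h(\partial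 h)(\bar x,\bar y^* )=\{\bar A L^*\mid L\in \mathcal{S}_f(\partial f)(\bar x,\bar x^* )\}. \end{align*}
   Context: For a function $\varphi:\mathbb{R}^n\to(-\infty,\infty]$ finite at $x$, the regular subdifferential is $\widehat\partial\varphi(x)=\{x^*\mid \liminf_{y\to x}\frac{\varphi(y)-\varphi(x)-\langle x^*,y-x\rangle}{\|y-x\|}\ge 0\}$, and the (limiting) subdifferential $\partial\varphi(x)$ is the set of $x^*$ for which there exist $x_k\to x$ with $\varphi(x_k)\to\varphi(x)$ and $x_k^*\to x^*$, $x_k^*\in\widehat\partial\varphi(x_k)$. We write $(x_k,x_k^* )\xrightarrow{\varphi}(x,x^* )$ ($\varphi$-attentive convergence in $\operatorname{gph}\partial\varphi$) if $(x_k,x_k^* )\in\operatorname{gph}\partial\varphi$, $(x_k,x_k^* )\to(x,x^* )$ and $\varphi(x_k)\to\varphi(x)$. For $(x,x^* )\in\operatorname{gph}\partial\varphi$: - the $\varphi$-attentive tangent cone $T^\varphi_{\operatorname{gph}\partial\varphi}(x,x^* )$ is the set of $(u,u^* )$ such that there exist $t_k\downarrow0$ and $(x_k,x_k^* )\xrightarrow{\varphi}(x,x^* )$ with $(u,u^* )=\lim_k ((x_k,x_k^* )-(x,x^* ))/t_k$; - $\widehat N^\varphi_{\operatorname{gph}\partial\varphi}(x,x^* )$ is the polar cone of $T^\varphi_{\operatorname{gph}\partial\varphi}(x,x^* )$, and $N^\varphi_{\operatorname{gph}\partial\varphi}(x,x^* )$ is the set of limits of sequences $(v_k)$ with $v_k\in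 \widehat N^\varphi_{\operatorname{gph}\partial\varphi}(x_k,x_k^* )$ for some $(x_k,x_k^* )\xrightarrow{\varphi}(x,x^* )$; - $\operatorname{gph}D_\varphi(\partial\varphi)(x,x^* )=T^\varphi_{\operatorname{gph}\partial\varphi}(x,x^* )$, $\operatorname{gph}\widehat D^*_\varphi(\partial\varphi)(x,x^* )=\{(u,u^* )\mid (u^*,-u)\in \widehat N^\varphi_{\operatorname{gph}\partial\varphi}(x,x^* )\}$, $\operatorname{gph}D^*_\varphi(\partial\varphi)(x,x^* )=\{(u,u^* )\mid (u^*,-u)\in N^\varphi_{\operatorname{gph}\partial\varphi}(x,x^* )\}$; - $\mathcal Z_{nn}$ is the set of $n$-dimensional subspaces of $\mathbb{R}^n\times\mathbb{R}^n$ with metric $d(L_1,L_2)=\|P_{L_1}-P_{L_2}\|$ ($P_L$ orthogonal projection onto $L$); for $L\in\mathcal Z_{nn}$ the adjoint subspace is $L^*=\{(v^*,u^* )\mid (u^*,-v^* )\in L^\perp\}$; - $\mathcal O^\varphi_{\partial\varphi}$ is the set of $(x,x^* )\in\operatorname{gph}\partial\varphi$ with $T^\varphi_{\operatorname{gph}\partial\varphi}(x,x^* )\in\mathcal Z_{nn}$; the $\varphi$-attentive SC derivative $\mathcal S_\varphi(\partial\varphi)(x,x^* )$ is the set of $L\in\mathcal Z_{nn}$ for which there are $(x_k,x_k^* )\in\mathcal O^\varphi_{\partial\varphi}$ with $(x_k,x_k^* )\xrightarrow{\varphi}(x,x^* )$ and $d(L,T^\varphi_{\operatorname{gph}\partial\varphi}(x_k,x_k^*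 ))\to 0$; and $\mathcal S^*_\varphi(\partial\varphi)(x,x^* )=\{L^*\mid L\in\mathcal S_\varphi(\partial\varphi)(x,x^* )\}$. These are applied with $\varphi=f$ and $\varphi=h$. $A^{-T}$ denotes $(A^T)^{-1}$. *)

theory Defs
  imports "HOL-Analysis.Analysis" "HOL-Library.Extended_Real"
begin

type_synonym 'n pt = "(real^'n) \<times> (real^'n)"

definition rsubdiff :: "(real^'n::finite \<Rightarrow> ereal) \<Rightarrow> real^'n \<Rightarrow> (real^'n) set" where
  "rsubdiff \<phi> x = {xs. \<bar>\<phi> x\<bar> \<noteq> \<infinity> \<and>
      Liminf (at x) (\<lambda>y. (\<phi> y - \<phi> x - ereal (xs \<bullet> (y - x))) / ereal (norm (y - x))) \<ge> 0}"

definition subdiff :: "(real^'n::finite \<Rightarrow> ereal) \<Rightarrow> real^'n \<Rightarrow> (real^'n) set" where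
  "subdiff \<phi> x = {xs. \<bar>\<phi> x\<bar> \<noteq> \<infinity> \<and>
      (\<exists>xk xsk. xk \<longlonglongrightarrow> x \<and> (\<lambda>k. \<phi> (xk k)) \<longlonglongrightarrow> \<phi> x \<and> xsk \<longlonglongrightarrow> xs
               \<and> (\<forall>k. xsk k \<in> rsubdiff \<phi> (xk k)))}"

definition gph_subdiff :: "(real^'n::finite \<Rightarrow> ereal) \<Rightarrow> 'n pt set" where
  "gph_subdiff \<phi> = {(x, xs). xs \<in> subdiff \<phi> x}"

definition att_conv :: "(real^'n::finite \<Rightarrow> ereal) \<Rightarrow> (nat \<Rightarrow> 'n pt) \<Rightarrow> 'n pt \<Rightarrow> bool" where
  "att_conv \<phi> zk z \<longleftrightarrow> (\<forall>k. zk k \<in> gph_subdiff \<phi>) \<and> zk \<longlonglongrightarrow> z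
      \<and> (\<lambda>k. \<phi> (fst (zk k))) \<longlonglongrightarrow> \<phi> (fst z)"

definition att_tangent :: "(real^'n::finite \<Rightarrow> ereal) \<Rightarrow> 'n pt \<Rightarrow> 'n pt set" where
  "att_tangent \<phi> z = {w. \<exists>t zk. (\<forall>k. t k > 0) \<and> decseq t \<and> t \<longlonglongrightarrow> 0 \<and> att_conv \<phi> zk z
      \<and> (\<lambda>k. (1 / t k) *\<^sub>R (zk k - z)) \<longlonglongrightarrow> w}"

definition att_rnormal :: "(real^'n::finite \<Rightarrow> ereal) \<Rightarrow> 'n pt \<Rightarrow> 'n pt set" where
  "att_rnormal \<phi> z = {v. \<forall>w \<in> att_tangent \<phi> z. v \<bullet> w \<le> 0}"

definition att_normal :: "(real^'n::finite \<Rightarrow> ereal) \<Rightarrow> 'n pt \<Rightarrow> 'n pt set" where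
  "att_normal \<phi> z = {v. \<exists>zk vk. att_conv \<phi> zk z \<and> vk \<longlonglongrightarrow> v \<and> (\<forall>k. vk k \<in> att_rnormal \<phi> (zk k))}"

definition gph_D :: "(real^'n::finite \<Rightarrow> ereal) \<Rightarrow> 'n pt \<Rightarrow> 'n pt set" where
  "gph_D \<phi> z = att_tangent \<phi> z"

definition gph_rcoD :: "(real^'n::finite \<Rightarrow> ereal) \<Rightarrow> 'n pt \<Rightarrow> 'n pt set" where
  "gph_rcoD \<phi> z = {(u, us). (us, - u) \<in> att_rnormal \<phi> z}"

definition gph_coD :: "(real^'n::finite \<Rightarrow> ereal) \<Rightarrow> 'n pt \<Rightarrow> 'n pt set" where
  "gph_coD \<phi> z = {(u, us). (us, - u) \<in> att_normal \<phi> z}"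

definition Znn :: "'n::finite pt set set" where
  "Znn = {L. subspace L \<and> dim L = CARD('n)}"

definition proj :: "'n::finite pt set \<Rightarrow> 'n pt \<Rightarrow> 'n pt" where
  "proj L z = (THE p. p \<in> L \<and> z - p \<in> orthogonal_comp L)"

definition subspace_dist :: "'n::finite pt set \<Rightarrow> 'n pt set \<Rightarrow> real" where
  "subspace_dist L1 L2 = onorm (\<lambda>z. proj L1 z - proj L2 z)"

definition adj_subspace :: "'n::finite pt set \<Rightarrow> 'n pt set" where
  "adj_subspace L = {(vs, us). (us, - vs) \<in> orthogonal_comp L}"

definition O_set :: "(real^'n \<Rightarrow> ereal) \<Rightarrow> 'n::finite pt set" where
  "O_set \<phi> = {z \<in> gph_subdiff \<phi>. att_tangent \<phi> z \<in> Znn}"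

definition SC :: "(real^'n \<Rightarrow> ereal) \<Rightarrow> 'n::finite pt \<Rightarrow> 'n pt set set" where
  "SC \<phi> z = {L \<in> Znn. \<exists>zk. (\<forall>k. zk k \<in> O_set \<phi>) \<and> att_conv \<phi> zk z
      \<and> (\<lambda>k. subspace_dist L (att_tangent \<phi> (zk k))) \<longlonglongrightarrow> 0}"

definition SC_star :: "(real^'n \<Rightarrow> ereal) \<Rightarrow> 'n::finite pt \<Rightarrow> 'n pt set set" where
  "SC_star \<phi> z = adj_subspace ` SC \<phi> z"

definition Amat :: "real^'n::finite^'n \<Rightarrow> 'n pt \<Rightarrow> 'n pt" where
  "Amat M = (\<lambda>(u, us). (u, M *v u + us))"

end

theory Submission
  imports Defs
begin

lemma mvt_pos:
  fixes psi :: "real \<Rightarrow> real"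
  assumes "t > 0" and "\<And>s. (psi has_real_derivative dpsi s) (at s)"
  obtains z where "0 < z" "z < t" "psi t - psi 0 = t * dpsi z"
  using MVT2[of 0 t psi dpsi] assms by auto

lemma hess_sym_aux:
  fixes g :: "real^'n \<Rightarrow> real" and G :: "real^'n \<Rightarrow> real^'n" and H :: "real^'n^'n"
  assumes grad: "\<forall>x. (g has_derivative (\<lambda>v. G x \<bullet> v)) (at x)"
    and hx: "(G has_derivative (\<lambda>v. H *v v)) (at x)"
    and e: "e > 0"
  shows "\<exists>d>0. \<forall>t. 0 < t \<and> t < d \<longrightarrow>
     \<bar>(g (x + t *\<^sub>R u + t *\<^sub>R v) - g (x + t *\<^sub>R u) - g (x + t *\<^sub>R v) + g x) - t^2 * ((H *v v) \<bullet> u)\<bar>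
       \<le> t^2 * (2 * e * norm u * (norm u + norm v))"
proof -
  obtain d where d: "d > 0" and dH: "\<And>y. norm (y - x) < d \<Longrightarrow> norm (G y - G x - H *v (y - x)) \<le> e * norm (y - x)"
    using hx e unfolding has_derivative_at_alt by blast
  define d' where "d' = d / (norm u + norm v + 1)"
  have d'pos: "d' > 0" using d by (simp add: d'_def add_nonneg_pos)
  show ?thesis
  proof (intro exI[of _ d'] conjI allI impI d'pos)
    fix t :: real assume t: "0 < t \<and> t < d'"
    define psi where "psi s = g (x + s *\<^sub>R u + t *\<^sub>R v) - g (x + s *\<^sub>R u)" for s
    define dpsi where "dpsi s = G (x + s *\<^sub>R u + t *\<^sub>R v) \<bullet> u - G (x + s *\<^sub>R u) \<bullet> u" for s
    have der: "(psi has_real_derivative dpsi s) (at s)" for s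
    proof -
      have 1: "((\<lambda>s. x + s *\<^sub>R u + t *\<^sub>R v) has_derivative (\<lambda>h. h *\<^sub>R u)) (at s)"
        by (auto intro!: derivative_eq_intros)
      have 2: "((\<lambda>s. x + s *\<^sub>R u) has_derivative (\<lambda>h. h *\<^sub>R u)) (at s)"
        by (auto intro!: derivative_eq_intros)
      have a: "((\<lambda>s. g (x + s *\<^sub>R u + t *\<^sub>R v)) has_derivative (\<lambda>h. G (x + s *\<^sub>R u + t *\<^sub>R v) \<bullet> (h *\<^sub>R u))) (at s)"
        using has_derivative_compose[OF 1 grad[rule_format]] by simp
      have b: "((\<lambda>s. g (x + s *\<^sub>R u)) has_derivative (\<lambda>h. G (x + s *\<^sub>R u) \<bullet> (h *\<^sub>R u))) (at s)"
        using has_derivative_compose[OF 2 grad[rule_format]] by simp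
      have "(psi has_derivative (\<lambda>h. G (x + s *\<^sub>R u + t *\<^sub>R v) \<bullet> (h *\<^sub>R u) - G (x + s *\<^sub>R u) \<bullet> (h *\<^sub>R u))) (at s)"
        unfolding psi_def by (rule has_derivative_diff[OF a b])
      then show ?thesis unfolding has_field_derivative_def dpsi_def
        by (rule has_derivative_eq_rhs) (auto simp: algebra_simps)
    qed
    obtain z where z: "0 < z" "z < t" "psi t - psi 0 = t * dpsi z"
      using mvt_pos[of t psi dpsi] der t by blast
    define y1 where "y1 = x + z *\<^sub>R u + t *\<^sub>R v"
    define y2 where "y2 = x + z *\<^sub>R u"
    have nb: "norm (z *\<^sub>R u + t *\<^sub>R v) \<le> t * (norm u + norm v)" "norm (z *\<^sub>R u) \<le> t * (norm u + norm v)"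
    proof -
      have "norm (z *\<^sub>R u + t *\<^sub>R v) \<le> z * norm u + t * norm v"
        using norm_triangle_ineq[of "z *\<^sub>R u" "t *\<^sub>R v"] z t by simp
      also have "\<dots> \<le> t * (norm u + norm v)" using z by (simp add: algebra_simps mult_right_mono)
      finally show "norm (z *\<^sub>R u + t *\<^sub>R v) \<le> t * (norm u + norm v)" .
      have "norm (z *\<^sub>R u) = z * norm u" using z by simp
      also have "\<dots> \<le> t * (norm u + norm v)" using z by (simp add: algebra_simps mult_right_mono add_increasing2)
      finally show "norm (z *\<^sub>R u) \<le> t * (norm u + norm v)" .
    qed
    have tb: "t * (norm u + norm v) < d"
    proof -
      have "t * (norm u + norm v) \<le> t * (norm u + norm v + 1)" using t by simp
      also have "\<dots> < d' * (norm u + norm v + 1)" using t by (intro mult_strict_right_mono) (auto simp: add_nonneg_pos)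
      also have "\<dots> = d" proof -
        have "norm u + norm v + 1 \<noteq> 0" using norm_ge_zero[of u] norm_ge_zero[of v] by linarith
        then show ?thesis unfolding d'_def by simp
      qed
      finally show ?thesis .
    qed
    have e1: "norm (G y1 - G x - H *v (y1 - x)) \<le> e * (t * (norm u + norm v))"
    proof -
      have "y1 - x = z *\<^sub>R u + t *\<^sub>R v" by (simp add: y1_def)
      then show ?thesis using dH[of y1] nb tb e by (auto intro: order_trans mult_left_mono)
    qed
    have e2: "norm (G y2 - G x - H *v (y2 - x)) \<le> e * (t * (norm u + norm v))"
    proof -
      have "y2 - x = z *\<^sub>R u" by (simp add: y2_def)
      then show ?thesis using dH[of y2] nb tb e by (auto intro: order_trans mult_left_mono)
    qed
    have eq: "G y1 - G y2 - H *v (t *\<^sub>R v) = (G y1 - G x - H *v (y1 - x)) - (G y2 - G x - H *v (y2 - x))"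
      by (simp add: y1_def y2_def matrix_vector_right_distrib algebra_simps)
    have "norm (G y1 - G y2 - H *v (t *\<^sub>R v)) \<le> norm (G y1 - G x - H *v (y1 - x)) + norm (G y2 - G x - H *v (y2 - x))"
      unfolding eq by (rule norm_triangle_ineq4)
    then have e3: "norm (G y1 - G y2 - H *v (t *\<^sub>R v)) \<le> 2 * e * (t * (norm u + norm v))"
      using e1 e2 by linarith
    have "psi t - psi 0 - t^2 * ((H *v v) \<bullet> u) = t * ((G y1 - G y2 - H *v (t *\<^sub>R v)) \<bullet> u)"
      using z(3) by (simp add: dpsi_def y1_def y2_def power2_eq_square inner_diff_left matrix_vector_mult_scaleR algebra_simps)
    then have "\<bar>psi t - psi 0 - t^2 * ((H *v v) \<bullet> u)\<bar> = t * \<bar>(G y1 - G y2 - H *v (t *\<^sub>R v)) \<bullet> u\<bar>"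
      using t by (simp add: abs_mult)
    also have "\<dots> \<le> t * (norm (G y1 - G y2 - H *v (t *\<^sub>R v)) * norm u)"
      using t by (intro mult_left_mono Cauchy_Schwarz_ineq2) auto
    also have "\<dots> \<le> t * ((2 * e * (t * (norm u + norm v))) * norm u)"
      using t e3 by (intro mult_left_mono mult_right_mono) auto
    also have "\<dots> = t^2 * (2 * e * norm u * (norm u + norm v))" by (simp add: power2_eq_square algebra_simps)
    finally show "\<bar>(g (x + t *\<^sub>R u + t *\<^sub>R v) - g (x + t *\<^sub>R u) - g (x + t *\<^sub>R v) + g x) - t^2 * ((H *v v) \<bullet> u)\<bar>
       \<le> t^2 * (2 * e * norm u * (norm u + norm v))"
      by (simp add: psi_def algebra_simps)
  qed
qed

lemma hess_sym_vec:
  fixes g :: "real^'n \<Rightarrow> real" and G :: "real^'n \<Rightarrow> real^'n" and H :: "real^'n^'n"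
  assumes grad: "\<forall>x. (g has_derivative (\<lambda>v. G x \<bullet> v)) (at x)"
    and hx: "(G has_derivative (\<lambda>v. H *v v)) (at x)"
  shows "(H *v v) \<bullet> u = (H *v u) \<bullet> v"
proof -
  define K where "K = 2 * (norm u + norm v)^2"
  have K0: "K \<ge> 0" by (simp add: K_def)
  have main: "\<bar>(H *v v) \<bullet> u - (H *v u) \<bullet> v\<bar> \<le> e * K" if e: "e > 0" for e
  proof -
    obtain d1 where d1: "d1 > 0" "\<And>t. 0 < t \<and> t < d1 \<Longrightarrow>
     \<bar>(g (x + t *\<^sub>R u + t *\<^sub>R v) - g (x + t *\<^sub>R u) - g (x + t *\<^sub>R v) + g x) - t^2 * ((H *v v) \<bullet> u)\<bar>
       \<le> t^2 * (2 * e * norm u * (norm u + norm v))"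
      using hess_sym_aux[OF grad hx e, of u v] by blast
    obtain d2 where d2: "d2 > 0" "\<And>t. 0 < t \<and> t < d2 \<Longrightarrow>
     \<bar>(g (x + t *\<^sub>R v + t *\<^sub>R u) - g (x + t *\<^sub>R v) - g (x + t *\<^sub>R u) + g x) - t^2 * ((H *v u) \<bullet> v)\<bar>
       \<le> t^2 * (2 * e * norm v * (norm v + norm u))"
      using hess_sym_aux[OF grad hx e, of v u] by blast
    define t where "t = min d1 d2 / 2"
    have t: "0 < t" "t < d1" "t < d2" using d1 d2 by (auto simp: t_def)
    have c: "x + t *\<^sub>R v + t *\<^sub>R u = x + t *\<^sub>R u + t *\<^sub>R v" by (simp add: algebra_simps)
    define P where "P = g (x + t *\<^sub>R u + t *\<^sub>R v) - g (x + t *\<^sub>R u) - g (x + t *\<^sub>R v) + g x"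
    have A: "\<bar>P - t^2 * ((H *v v) \<bullet> u)\<bar> \<le> t^2 * (2 * e * norm u * (norm u + norm v))"
      using d1(2)[of t] t unfolding P_def by auto
    have B: "\<bar>P - t^2 * ((H *v u) \<bullet> v)\<bar> \<le> t^2 * (2 * e * norm v * (norm v + norm u))"
      using d2(2)[of t] t unfolding P_def c by argo
    have "\<bar>t^2 * ((H *v v) \<bullet> u - (H *v u) \<bullet> v)\<bar> \<le> t^2 * (2 * e * norm u * (norm u + norm v)) + t^2 * (2 * e * norm v * (norm v + norm u))"
      using A B by (simp add: algebra_simps abs_le_iff) 
    also have "\<dots> = t^2 * (e * K)" by (simp add: K_def power2_eq_square algebra_simps)
    finally have "t^2 * \<bar>(H *v v) \<bullet> u - (H *v u) \<bullet> v\<bar> \<le> t^2 * (e * K)" by (simp add: abs_mult)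
    then show ?thesis using t by simp
  qed
  show ?thesis
  proof (cases "K = 0")
    case True then show ?thesis using main[of 1] by simp
  next
    case False
    then have "K > 0" using K0 by simp
    show ?thesis
    proof (rule ccontr)
      assume "\<not> ?thesis"
      then have p: "\<bar>(H *v v) \<bullet> u - (H *v u) \<bullet> v\<bar> > 0" by simp
      have "\<bar>(H *v v) \<bullet> u - (H *v u) \<bullet> v\<bar> \<le> (\<bar>(H *v v) \<bullet> u - (H *v u) \<bullet> v\<bar> / (2*K)) * K"
        using main[of "\<bar>(H *v v) \<bullet> u - (H *v u) \<bullet> v\<bar> / (2*K)"] p \<open>K > 0\<close> by simp
      also have "\<dots> = \<bar>(H *v v) \<bullet> u - (H *v u) \<bullet> v\<bar> / 2" using \<open>K > 0\<close> by simp
      finally show False using p by simp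
    qed
  qed
qed

lemma hess_sym:
  fixes g :: "real^'n \<Rightarrow> real" and G :: "real^'n \<Rightarrow> real^'n" and H :: "real^'n^'n"
  assumes grad: "\<forall>x. (g has_derivative (\<lambda>v. G x \<bullet> v)) (at x)"
    and hx: "(G has_derivative (\<lambda>v. H *v v)) (at x)"
  shows "transpose H = H"
proof -
  have "H $ i $ j = H $ j $ i" for i j
  proof -
    have "(H *v axis j 1) \<bullet> axis i 1 = (H *v axis i 1) \<bullet> axis j 1"
      by (rule hess_sym_vec[OF grad hx])
    then show ?thesis by (simp add: inner_axis matrix_vector_mult_basis column_def)
  qed
  then show ?thesis by (simp add: transpose_def vec_eq_iff)
qed


lemma liminf_shift_aux:
  fixes Q :: "'a \<Rightarrow> ereal" and r :: "'a \<Rightarrow> real"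
  assumes Q: "0 \<le> Liminf F Q" and r: "(r \<longlongrightarrow> 0) F"
  shows "0 \<le> Liminf F (\<lambda>y. Q y + ereal (r y))"
  unfolding le_Liminf_iff
proof (intro allI impI)
  fix c :: ereal assume c: "c < 0"
  obtain c' where c': "c < ereal c'" "c' < 0"
    using c by (metis ereal_dense2 ereal_less(2) less_ereal.simps(1) less_ereal.simps(4)
        ereal_cases zero_ereal_def dense less_ereal.simps(2))
  have e1: "eventually (\<lambda>y. ereal (c'/2) < Q y) F"
    using Q unfolding le_Liminf_iff using c' by (simp add: zero_ereal_def)
  have e2: "eventually (\<lambda>y. dist (r y) 0 < - c'/2) F"
    using r c' unfolding tendsto_iff by simp
  show "eventually (\<lambda>y. c < Q y + ereal (r y)) F"
    using e1 e2
  proof eventually_elim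
    case (elim y)
    then have ry: "r y > c'/2" by (simp add: dist_real_def abs_less_iff)
    show ?case
    proof (cases "Q y")
      case (real q)
      then have "c' < q + r y" using elim ry by simp
      then show ?thesis using real c' by (metis less_ereal.simps(1) order_less_trans plus_ereal.simps(1))
    next
      case PInf then show ?thesis using c' by (cases c) auto
    next
      case MInf then show ?thesis using elim by simp
    qed
  qed
qed

lemma liminf_shift:
  fixes Q :: "'a \<Rightarrow> ereal" and r :: "'a \<Rightarrow> real"
  assumes r: "(r \<longlongrightarrow> 0) F"
  shows "0 \<le> Liminf F (\<lambda>y. Q y + ereal (r y)) \<longleftrightarrow> 0 \<le> Liminf F Q"
proof
  assume "0 \<le> Liminf F (\<lambda>y. Q y + ereal (r y))"
  from liminf_shift_aux[OF this, of "\<lambda>y. - r y"] r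
  have "0 \<le> Liminf F (\<lambda>y. Q y + ereal (r y) + ereal (- r y))"
    using tendsto_minus[OF r] by simp
  moreover have "(\<lambda>y. Q y + ereal (r y) + ereal (- r y)) = Q"
  proof
    fix y show "Q y + ereal (r y) + ereal (- r y) = Q y" by (cases "Q y") auto
  qed
  ultimately show "0 \<le> Liminf F Q" by simp
qed (rule liminf_shift_aux[OF _ r])


context
  fixes f :: "real^'n::finite \<Rightarrow> ereal" and g :: "real^'n \<Rightarrow> real" and G :: "real^'n \<Rightarrow> real^'n"
    and H :: "real^'n \<Rightarrow> real^'n^'n" and h :: "real^'n \<Rightarrow> ereal"
  assumes f_range: "\<forall>x. f x \<noteq> -\<infinity>"
    and grad: "\<forall>x. (g has_derivative (\<lambda>v. G x \<bullet> v)) (at x)"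
    and hess: "\<forall>x. (G has_derivative (\<lambda>v. H x *v v)) (at x)"
    and hess_cont: "continuous_on UNIV H"
    and h_def: "h = (\<lambda>x. f x + ereal (g x))"
begin

lemma g_cont: "isCont g x"
  using has_derivative_continuous[OF grad[rule_format, of x]] by (simp add: continuous_at)

lemma G_cont: "isCont G x"
  using has_derivative_continuous[OF hess[rule_format, of x]] by (simp add: continuous_at)

lemma H_cont: "isCont H x"
  using hess_cont by (simp add: continuous_on_eq_continuous_at)

lemma r_tendsto: "((\<lambda>y. (g y - g x - G x \<bullet> (y - x)) / norm (y - x)) \<longlongrightarrow> 0) (at x)"
proof -
  have "((\<lambda>y. norm (g y - g x - G x \<bullet> (y - x)) / norm (y - x)) \<longlongrightarrow> 0) (at x)"
    using grad[rule_format, of x] unfolding has_derivative_iff_norm by simp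
  moreover have "(\<lambda>y. \<bar>(g y - g x - G x \<bullet> (y - x)) / norm (y - x)\<bar>) = (\<lambda>y. norm (g y - g x - G x \<bullet> (y - x)) / norm (y - x))"
    by (simp add: abs_divide)
  ultimately show ?thesis using tendsto_rabs_zero_iff[of "\<lambda>y. (g y - g x - G x \<bullet> (y - x)) / norm (y - x)" "at x"] by simp
qed

lemma h_fin: "\<bar>h x\<bar> \<noteq> \<infinity> \<longleftrightarrow> \<bar>f x\<bar> \<noteq> \<infinity>"
  using f_range[rule_format, of x] unfolding h_def by (cases "f x") auto

lemma rsub_h: "s \<in> rsubdiff h x \<longleftrightarrow> s - G x \<in> rsubdiff f x"
proof (cases "\<bar>f x\<bar> \<noteq> \<infinity>")
  case False then show ?thesis using h_fin[of x] unfolding rsubdiff_def by auto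
next
  case True
  then obtain a where a: "f x = ereal a" by (cases "f x") auto
  define r where "r y = (g y - g x - G x \<bullet> (y - x)) / norm (y - x)" for y
  have ev: "eventually (\<lambda>y. (h y - h x - ereal (s \<bullet> (y - x))) / ereal (norm (y - x)) =
     (f y - f x - ereal ((s - G x) \<bullet> (y - x))) / ereal (norm (y - x)) + ereal (r y)) (at x)"
    unfolding eventually_at_filter
  proof (intro always_eventually allI impI)
    fix y assume "y \<noteq> x"
    then have n: "norm (y - x) > 0" by simp
    show "(h y - h x - ereal (s \<bullet> (y - x))) / ereal (norm (y - x)) =
     (f y - f x - ereal ((s - G x) \<bullet> (y - x))) / ereal (norm (y - x)) + ereal (r y)"
    proof (cases "f y")
      case (real b)
      have "(b + g y - (a + g x) - s \<bullet> (y - x)) / norm (y - x) =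
         (b - a - (s - G x) \<bullet> (y - x)) / norm (y - x) + r y"
      proof -
        have "b + g y - (a + g x) - s \<bullet> (y - x) = (b - a - (s - G x) \<bullet> (y - x)) + (g y - g x - G x \<bullet> (y - x))"
          by (simp add: inner_diff_left algebra_simps)
        then show ?thesis unfolding r_def by (metis add_divide_distrib)
      qed
      then show ?thesis using n unfolding h_def by (simp add: a real)
    next
      case PInf then show ?thesis using n unfolding h_def by (simp add: a)
    next
      case MInf then show ?thesis using f_range by simp
    qed
  qed
  have "r \<midarrow>x\<rightarrow> 0" unfolding r_def by (rule r_tendsto)
  then show ?thesis unfolding rsubdiff_def using h_fin[of x] True
    by (simp add: Liminf_eq[OF ev] liminf_shift)
qed

end


definition PhiM :: "(real^'n::finite \<Rightarrow> real^'n) \<Rightarrow> 'n pt \<Rightarrow> 'n pt" where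
  "PhiM G z = (fst z, snd z + G (fst z))"
definition PsiM :: "(real^'n::finite \<Rightarrow> real^'n) \<Rightarrow> 'n pt \<Rightarrow> 'n pt" where
  "PsiM G z = (fst z, snd z - G (fst z))"

lemma PsiM_PhiM[simp]: "PsiM G (PhiM G z) = z" and PhiM_PsiM[simp]: "PhiM G (PsiM G z) = z"
  by (auto simp: PsiM_def PhiM_def)

context
  fixes f :: "real^'n::finite \<Rightarrow> ereal" and g :: "real^'n \<Rightarrow> real" and G :: "real^'n \<Rightarrow> real^'n"
    and H :: "real^'n \<Rightarrow> real^'n^'n" and h :: "real^'n \<Rightarrow> ereal"
  assumes f_range: "\<forall>x. f x \<noteq> -\<infinity>"
    and grad: "\<forall>x. (g has_derivative (\<lambda>v. G x \<bullet> v)) (at x)"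
    and hess: "\<forall>x. (G has_derivative (\<lambda>v. H x *v v)) (at x)"
    and hess_cont: "continuous_on UNIV H"
    and h_def: "h = (\<lambda>x. f x + ereal (g x))"
begin

lemma val_conv:
  assumes xk: "xk \<longlonglongrightarrow> x" and fin: "\<bar>f x\<bar> \<noteq> \<infinity>"
  shows "(\<lambda>k. h (xk k)) \<longlonglongrightarrow> h x \<longleftrightarrow> (\<lambda>k. f (xk k)) \<longlonglongrightarrow> f x"
proof -
  have gk: "(\<lambda>k. g (xk k)) \<longlonglongrightarrow> g x"
    using isCont_tendsto_compose[OF g_cont[OF f_range grad hess hess_cont h_def] xk] .
  have hfin: "\<bar>h x\<bar> \<noteq> \<infinity>" using h_fin[OF f_range grad hess hess_cont h_def] fin by simp
  show ?thesis
  proof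
    assume a: "(\<lambda>k. h (xk k)) \<longlonglongrightarrow> h x"
    have "(\<lambda>k. h (xk k) + ereal (- g (xk k))) \<longlonglongrightarrow> h x + ereal (- g x)"
      by (rule tendsto_add_ereal[OF hfin _ a]) (auto intro: tendsto_minus gk)
    moreover have "h y + ereal (- g y) = f y" for y unfolding h_def by (cases "f y") auto
    ultimately show "(\<lambda>k. f (xk k)) \<longlonglongrightarrow> f x" by simp
  next
    assume a: "(\<lambda>k. f (xk k)) \<longlonglongrightarrow> f x"
    show "(\<lambda>k. h (xk k)) \<longlonglongrightarrow> h x"
      unfolding h_def by (rule tendsto_add_ereal[OF fin _ a]) (auto intro: gk)
  qed
qed

lemma sub_h: "s \<in> subdiff h x \<longleftrightarrow> s - G x \<in> subdiff f x"
proof (cases "\<bar>f x\<bar> \<noteq> \<infinity>")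
  case False then show ?thesis using h_fin[OF f_range grad hess hess_cont h_def, of x] unfolding subdiff_def by auto
next
  case fin: True
  have Gc: "\<And>xk x. xk \<longlonglongrightarrow> x \<Longrightarrow> (\<lambda>k. G (xk k)) \<longlonglongrightarrow> G x"
    using isCont_tendsto_compose[OF G_cont[OF f_range grad hess hess_cont h_def]] by blast
  show ?thesis
  proof
    assume "s \<in> subdiff h x"
    then obtain xk sk where a: "xk \<longlonglongrightarrow> x" "(\<lambda>k. h (xk k)) \<longlonglongrightarrow> h x" "sk \<longlonglongrightarrow> s" "\<forall>k. sk k \<in> rsubdiff h (xk k)"
      unfolding subdiff_def by blast
    show "s - G x \<in> subdiff f x" unfolding subdiff_def
    proof (intro CollectI conjI exI)
      show "\<bar>f x\<bar> \<noteq> \<infinity>" by fact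
      show "xk \<longlonglongrightarrow> x" by fact
      show "(\<lambda>k. f (xk k)) \<longlonglongrightarrow> f x" using val_conv[OF a(1) fin] a(2) by simp
      show "(\<lambda>k. sk k - G (xk k)) \<longlonglongrightarrow> s - G x" by (intro tendsto_diff a Gc)
      show "\<forall>k. sk k - G (xk k) \<in> rsubdiff f (xk k)"
        using a(4) rsub_h[OF f_range grad hess hess_cont h_def] by blast
    qed
  next
    assume "s - G x \<in> subdiff f x"
    then obtain xk sk where a: "xk \<longlonglongrightarrow> x" "(\<lambda>k. f (xk k)) \<longlonglongrightarrow> f x" "sk \<longlonglongrightarrow> s - G x" "\<forall>k. sk k \<in> rsubdiff f (xk k)"
      unfolding subdiff_def by blast
    show "s \<in> subdiff h x" unfolding subdiff_def
    proof (intro CollectI conjI exI)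
      show "\<bar>h x\<bar> \<noteq> \<infinity>" using h_fin[OF f_range grad hess hess_cont h_def] fin by simp
      show "xk \<longlonglongrightarrow> x" by fact
      show "(\<lambda>k. h (xk k)) \<longlonglongrightarrow> h x" using val_conv[OF a(1) fin] a(2) by simp
      have "(\<lambda>k. sk k + G (xk k)) \<longlonglongrightarrow> s - G x + G x" by (intro tendsto_add a Gc)
      then show "(\<lambda>k. sk k + G (xk k)) \<longlonglongrightarrow> s" by simp
      show "\<forall>k. sk k + G (xk k) \<in> rsubdiff h (xk k)"
        using a(4) rsub_h[OF f_range grad hess hess_cont h_def] by simp
    qed
  qed
qed

lemma gph_h: "z \<in> gph_subdiff h \<longleftrightarrow> PsiM G z \<in> gph_subdiff f"
  by (cases z) (simp add: gph_subdiff_def PsiM_def sub_h)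

lemma gph_h': "PhiM G z \<in> gph_subdiff h \<longleftrightarrow> z \<in> gph_subdiff f"
  using gph_h[of "PhiM G z"] by simp

lemma gph_fin: "z \<in> gph_subdiff f \<Longrightarrow> \<bar>f (fst z)\<bar> \<noteq> \<infinity>"
  by (cases z) (simp add: gph_subdiff_def subdiff_def)

lemma Psi_tendsto: "zk \<longlonglongrightarrow> z \<Longrightarrow> (\<lambda>k. PsiM G (zk k)) \<longlonglongrightarrow> PsiM G z"
  unfolding PsiM_def
  by (intro tendsto_Pair tendsto_fst tendsto_snd tendsto_diff
        isCont_tendsto_compose[OF G_cont[OF f_range grad hess hess_cont h_def]])

lemma Phi_tendsto: "zk \<longlonglongrightarrow> z \<Longrightarrow> (\<lambda>k. PhiM G (zk k)) \<longlonglongrightarrow> PhiM G z"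
  unfolding PhiM_def
  by (intro tendsto_Pair tendsto_fst tendsto_snd tendsto_add
        isCont_tendsto_compose[OF G_cont[OF f_range grad hess hess_cont h_def]])

lemma att_conv_h:
  assumes fin: "\<bar>f (fst z)\<bar> \<noteq> \<infinity>"
  shows "att_conv h zk (PhiM G z) \<longleftrightarrow> att_conv f (\<lambda>k. PsiM G (zk k)) z"
proof -
  have "zk \<longlonglongrightarrow> PhiM G z \<longleftrightarrow> (\<lambda>k. PsiM G (zk k)) \<longlonglongrightarrow> z"
    using Psi_tendsto[of zk "PhiM G z"] Phi_tendsto[of "\<lambda>k. PsiM G (zk k)" z] by auto
  moreover have "zk \<longlonglongrightarrow> PhiM G z \<Longrightarrow>
     (\<lambda>k. h (fst (zk k))) \<longlonglongrightarrow> h (fst (PhiM G z)) \<longleftrightarrow> (\<lambda>k. f (fst (zk k))) \<longlonglongrightarrow> f (fst z)"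
  proof -
    assume a: "zk \<longlonglongrightarrow> PhiM G z"
    have "(\<lambda>k. fst (zk k)) \<longlonglongrightarrow> fst (PhiM G z)" by (rule tendsto_fst[OF a])
    then show ?thesis using val_conv[of "\<lambda>k. fst (zk k)" "fst z"] fin by (simp add: PhiM_def)
  qed
  ultimately show ?thesis unfolding att_conv_def
    by (auto simp: gph_h PsiM_def)
qed

lemma att_conv_h':
  assumes fin: "\<bar>f (fst z)\<bar> \<noteq> \<infinity>"
  shows "att_conv h (\<lambda>k. PhiM G (zk k)) (PhiM G z) \<longleftrightarrow> att_conv f zk z"
  using att_conv_h[OF fin, of "\<lambda>k. PhiM G (zk k)"] by simp

end


lemma seq_deriv:
  fixes Phi :: "'a::real_normed_vector \<Rightarrow> 'b::real_normed_vector"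
  assumes d: "(Phi has_derivative D) (at z)" and zk: "zk \<longlonglongrightarrow> z" and t: "\<forall>k. t k > 0"
    and w: "(\<lambda>k. (1 / t k) *\<^sub>R (zk k - z)) \<longlonglongrightarrow> w"
  shows "(\<lambda>k. (1 / t k) *\<^sub>R (Phi (zk k) - Phi z)) \<longlonglongrightarrow> D w"
proof -
  have bl: "bounded_linear D" using d by (rule has_derivative_bounded_linear)
  interpret D: bounded_linear D by fact
  define rho where "rho y = norm (Phi y - Phi z - D (y - z)) / norm (y - z)" for y
  have "(rho \<longlongrightarrow> 0) (at z)" using d unfolding has_derivative_iff_norm rho_def by simp
  moreover have "rho z = 0" by (simp add: rho_def)
  ultimately have "isCont rho z" by (simp add: continuous_at)
  then have r: "(\<lambda>k. rho (zk k)) \<longlonglongrightarrow> 0" using isCont_tendsto_compose[of z rho zk] zk \<open>rho z = 0\<close> by simp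
  have nw: "(\<lambda>k. norm ((1 / t k) *\<^sub>R (zk k - z))) \<longlonglongrightarrow> norm w" by (rule tendsto_norm[OF w])
  define e where "e k = (1 / t k) *\<^sub>R (Phi (zk k) - Phi z - D (zk k - z))" for k
  have ne: "norm (e k) = rho (zk k) * norm ((1 / t k) *\<^sub>R (zk k - z))" for k
  proof (cases "zk k = z")
    case True then show ?thesis by (simp add: e_def rho_def D.zero)
  next
    case False
    then show ?thesis using t[rule_format, of k] by (simp add: e_def rho_def)
  qed
  have "(\<lambda>k. norm (e k)) \<longlonglongrightarrow> 0 * norm w" unfolding ne by (intro tendsto_mult r nw)
  then have e0: "e \<longlonglongrightarrow> 0" by (simp add: tendsto_norm_zero_iff)
  have "(\<lambda>k. e k + D ((1 / t k) *\<^sub>R (zk k - z))) \<longlonglongrightarrow> 0 + D w"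
    by (intro tendsto_add e0 D.tendsto w)
  moreover have "e k + D ((1 / t k) *\<^sub>R (zk k - z)) = (1 / t k) *\<^sub>R (Phi (zk k) - Phi z)" for k
  proof -
    have "D ((1 / t k) *\<^sub>R (zk k - z)) = (1 / t k) *\<^sub>R D (zk k - z)" by (rule D.scaleR)
    then show ?thesis unfolding e_def by (simp add: algebra_simps)
  qed
  ultimately show ?thesis by simp
qed

lemma fst_PhiM[simp]: "fst (PhiM G z) = fst z" and fst_PsiM[simp]: "fst (PsiM G z) = fst z"
  by (auto simp: PhiM_def PsiM_def)

lemma neg_mv: "(- M) *v x = - (M *v x)" for M :: "real^'n^'m"
  using matrix_vector_mult_diff_rdistrib[of 0 M x] by simp

lemma Amat_eq: "Amat M = (\<lambda>p. (fst p, M *v fst p + snd p))"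
  by (auto simp: Amat_def)

lemma Amat_inv[simp]: "Amat M (Amat (-M) w) = w" "Amat (-M) (Amat M w) = w"
  by (auto simp: Amat_eq neg_mv algebra_simps)

lemma Amat_linear: "linear (Amat M)"
  unfolding Amat_eq
  by (intro linearI) (auto simp: matrix_vector_right_distrib matrix_vector_mult_scaleR algebra_simps scaleR_prod_def)

context
  fixes f :: "real^'n::finite \<Rightarrow> ereal" and g :: "real^'n \<Rightarrow> real" and G :: "real^'n \<Rightarrow> real^'n"
    and H :: "real^'n \<Rightarrow> real^'n^'n" and h :: "real^'n \<Rightarrow> ereal"
  assumes f_range: "\<forall>x. f x \<noteq> -\<infinity>"
    and grad: "\<forall>x. (g has_derivative (\<lambda>v. G x \<bullet> v)) (at x)"
    and hess: "\<forall>x. (G has_derivative (\<lambda>v. H x *v v)) (at x)"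
    and hess_cont: "continuous_on UNIV H"
    and h_def: "h = (\<lambda>x. f x + ereal (g x))"
begin

lemma Phi_deriv: "(PhiM G has_derivative Amat (H (fst z))) (at z)"
proof -
  have "((\<lambda>p. (fst p, snd p + G (fst p))) has_derivative (\<lambda>p. (fst p, snd p + H (fst z) *v fst p))) (at z)"
    by (intro has_derivative_Pair has_derivative_add has_derivative_fst has_derivative_snd
        has_derivative_ident has_derivative_compose[of fst fst, OF has_derivative_fst[OF has_derivative_ident] hess[rule_format]])
  then show ?thesis unfolding PhiM_def Amat_eq by (simp add: add.commute)
qed

lemma Psi_deriv: "(PsiM G has_derivative Amat (- H (fst z))) (at z)"
proof -
  have "((\<lambda>p. (fst p, snd p - G (fst p))) has_derivative (\<lambda>p. (fst p, snd p - H (fst z) *v fst p))) (at z)"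
    by (intro has_derivative_Pair has_derivative_diff has_derivative_fst has_derivative_snd
        has_derivative_ident has_derivative_compose[of fst fst, OF has_derivative_fst[OF has_derivative_ident] hess[rule_format]])
  then show ?thesis unfolding PsiM_def Amat_eq by (simp add: neg_mv)
qed

lemma tangent_h:
  assumes z: "z \<in> gph_subdiff f"
  shows "att_tangent h (PhiM G z) = Amat (H (fst z)) ` att_tangent f z"
proof -
  note fin = gph_fin[OF f_range grad hess hess_cont h_def z]
  note AC = att_conv_h[OF f_range grad hess hess_cont h_def fin]
  note AC' = att_conv_h'[OF f_range grad hess hess_cont h_def fin]
  show ?thesis
  proof (intro equalityI subsetI)
    fix w' assume "w' \<in> att_tangent h (PhiM G z)"
    then obtain t zk where a: "\<forall>k. t k > 0" "decseq t" "t \<longlonglongrightarrow> 0" "att_conv h zk (PhiM G z)"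
        "(\<lambda>k. (1 / t k) *\<^sub>R (zk k - PhiM G z)) \<longlonglongrightarrow> w'"
      unfolding att_tangent_def by blast
    have zk: "zk \<longlonglongrightarrow> PhiM G z" using a(4) unfolding att_conv_def by blast
    have "(\<lambda>k. (1 / t k) *\<^sub>R (PsiM G (zk k) - PsiM G (PhiM G z))) \<longlonglongrightarrow> Amat (- H (fst (PhiM G z))) w'"
      by (rule seq_deriv[OF Psi_deriv zk a(1) a(5)])
    then have "(\<lambda>k. (1 / t k) *\<^sub>R (PsiM G (zk k) - z)) \<longlonglongrightarrow> Amat (- H (fst z)) w'"
      by simp
    then have "Amat (- H (fst z)) w' \<in> att_tangent f z"
      unfolding att_tangent_def using a AC by blast
    moreover have "w' = Amat (H (fst z)) (Amat (- H (fst z)) w')" by simp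
    ultimately show "w' \<in> Amat (H (fst z)) ` att_tangent f z" by blast
  next
    fix w' assume "w' \<in> Amat (H (fst z)) ` att_tangent f z"
    then obtain w where w': "w' = Amat (H (fst z)) w" and "w \<in> att_tangent f z" by blast
    then obtain t zk where a: "\<forall>k. t k > 0" "decseq t" "t \<longlonglongrightarrow> 0" "att_conv f zk z"
        "(\<lambda>k. (1 / t k) *\<^sub>R (zk k - z)) \<longlonglongrightarrow> w"
      unfolding att_tangent_def by blast
    have zk: "zk \<longlonglongrightarrow> z" using a(4) unfolding att_conv_def by blast
    have "(\<lambda>k. (1 / t k) *\<^sub>R (PhiM G (zk k) - PhiM G z)) \<longlonglongrightarrow> Amat (H (fst z)) w"
      by (rule seq_deriv[OF Phi_deriv zk a(1) a(5)])
    then show "w' \<in> att_tangent h (PhiM G z)"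
      unfolding att_tangent_def w' using a AC' by blast
  qed
qed

end


definition AT :: "real^'n::finite^'n \<Rightarrow> 'n pt \<Rightarrow> 'n pt" where
  "AT M = (\<lambda>p. (fst p + transpose M *v snd p, snd p))"

lemma adjoint_Amat: "adjoint (Amat M) = AT M"
proof (rule adjoint_unique, intro allI)
  fix x y :: "'a pt"
  have "(M *v fst x) \<bullet> snd y = fst x \<bullet> (transpose M *v snd y)"
    by (simp add: dot_lmul_matrix[symmetric] inner_commute)
  then show "Amat M x \<bullet> y = x \<bullet> AT M y"
    by (cases x, cases y) (simp add: Amat_def AT_def inner_Pair inner_add_left inner_add_right)
qed

lemma transpose_neg': "transpose (- M) = - transpose M" for M :: "real^'n^'m"
  by (simp add: transpose_def vec_eq_iff)

lemma AT_inv[simp]: "AT M (AT (-M) w) = w" "AT (-M) (AT M w) = w"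
  by (auto simp: AT_def transpose_neg' neg_mv)

lemma inv_AT: "inv (AT M) = AT (-M)"
  by (rule inv_unique_comp) (auto simp: fun_eq_iff)

lemma inv_adjoint_Amat: "inv (adjoint (Amat M)) = AT (-M)"
  by (simp add: adjoint_Amat inv_AT)

lemma AT_image_iff: "v \<in> AT (-M) ` S \<longleftrightarrow> AT M v \<in> S"
proof
  assume "v \<in> AT (-M) ` S" then show "AT M v \<in> S" by auto
next
  assume "AT M v \<in> S"
  then show "v \<in> AT (-M) ` S" using AT_inv(2)[of M v] by (metis image_eqI AT_inv(1))
qed

lemma Amat_dot: "v \<bullet> Amat M w = AT M v \<bullet> w"
  using adjoint_Amat[of M] adjoint_works[OF Amat_linear[of M], of w v]
  by (simp add: inner_commute)

lemma tendsto_transpose_mv: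
  fixes Mk :: "nat \<Rightarrow> real^'n::finite^'n"
  assumes "Mk \<longlonglongrightarrow> M" "xk \<longlonglongrightarrow> x"
  shows "(\<lambda>k. transpose (Mk k) *v xk k) \<longlonglongrightarrow> transpose M *v x"
proof (rule vec_tendstoI)
  fix i
  have "(\<lambda>k. \<Sum>j\<in>UNIV. Mk k $ j $ i * xk k $ j) \<longlonglongrightarrow> (\<Sum>j\<in>UNIV. M $ j $ i * x $ j)"
    by (intro tendsto_sum tendsto_mult tendsto_vec_nth assms)
  then show "(\<lambda>k. (transpose (Mk k) *v xk k) $ i) \<longlonglongrightarrow> (transpose M *v x) $ i"
    by (simp add: matrix_vector_mult_def transpose_def)
qed

lemma tendsto_AT:
  assumes "Mk \<longlonglongrightarrow> M" "vk \<longlonglongrightarrow> v"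
  shows "(\<lambda>k. AT (Mk k) (vk k)) \<longlonglongrightarrow> AT M v"
  unfolding AT_def
  by (intro tendsto_Pair tendsto_add tendsto_fst tendsto_snd tendsto_transpose_mv assms)

lemma mv_neg: "M *v (- u) = - (M *v u)" for M :: "real^'n^'m"
  using matrix_vector_right_distrib[of M u "- u"] by (simp add: eq_neg_iff_add_eq_0 add.commute)

lemma coD_transfer:
  fixes S S' :: "'n::finite pt set"
  assumes iff: "\<And>p. p \<in> S \<longleftrightarrow> AT M p \<in> S'" and sym: "transpose M = M"
  shows "{(u, us). (us, - u) \<in> S} = Amat M ` {(u, us). (us, - u) \<in> S'}"
proof (intro equalityI subsetI)
  fix p assume "p \<in> {(u, us). (us, - u) \<in> S}"
  then obtain u us where p: "p = (u, us)" "(us, - u) \<in> S" by auto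
  then have "AT M (us, -u) \<in> S'" using iff by blast
  then have "(us - M *v u, - u) \<in> S'" using sym by (simp add: AT_def mv_neg)
  moreover have "p = Amat M (u, us - M *v u)" using p by (simp add: Amat_def)
  ultimately show "p \<in> Amat M ` {(u, us). (us, - u) \<in> S'}" by auto
next
  fix p assume "p \<in> Amat M ` {(u, us). (us, - u) \<in> S'}"
  then obtain u us where p: "p = Amat M (u, us)" "(us, - u) \<in> S'" by auto
  have "AT M (M *v u + us, - u) = (us, - u)" using sym by (simp add: AT_def mv_neg)
  then have "(M *v u + us, - u) \<in> S" using iff p(2) by simp
  then show "p \<in> {(u, us). (us, - u) \<in> S}" using p by (simp add: Amat_def)
qed

context
  fixes f :: "real^'n::finite \<Rightarrow> ereal" and g :: "real^'n \<Rightarrow> real" and G :: "real^'n \<Rightarrow> real^'n"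
    and H :: "real^'n \<Rightarrow> real^'n^'n" and h :: "real^'n \<Rightarrow> ereal"
  assumes f_range: "\<forall>x. f x \<noteq> -\<infinity>"
    and grad: "\<forall>x. (g has_derivative (\<lambda>v. G x \<bullet> v)) (at x)"
    and hess: "\<forall>x. (G has_derivative (\<lambda>v. H x *v v)) (at x)"
    and hess_cont: "continuous_on UNIV H"
    and h_def: "h = (\<lambda>x. f x + ereal (g x))"
begin

lemma rnormal_h:
  assumes z: "z \<in> gph_subdiff f"
  shows "v \<in> att_rnormal h (PhiM G z) \<longleftrightarrow> AT (H (fst z)) v \<in> att_rnormal f z"
  unfolding att_rnormal_def tangent_h[OF f_range grad hess hess_cont h_def z]
  by (simp add: Amat_dot)

lemma normal_h:
  assumes z: "z \<in> gph_subdiff f"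
  shows "v \<in> att_normal h (PhiM G z) \<longleftrightarrow> AT (H (fst z)) v \<in> att_normal f z"
proof -
  note fin = gph_fin[OF f_range grad hess hess_cont h_def z]
  note AC = att_conv_h[OF f_range grad hess hess_cont h_def fin]
  note AC' = att_conv_h'[OF f_range grad hess hess_cont h_def fin]
  have Hc: "\<And>xk x. xk \<longlonglongrightarrow> x \<Longrightarrow> (\<lambda>k. H (xk k)) \<longlonglongrightarrow> H x"
    using isCont_tendsto_compose[OF H_cont[OF f_range grad hess hess_cont h_def]] by blast
  have fstc: "\<And>zk. att_conv f zk z \<Longrightarrow> (\<lambda>k. fst (zk k)) \<longlonglongrightarrow> fst z"
    unfolding att_conv_def by (blast intro: tendsto_fst)
  have ingph: "\<And>zk k. att_conv f zk z \<Longrightarrow> zk k \<in> gph_subdiff f"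
    unfolding att_conv_def by blast
  show ?thesis
  proof
    assume "v \<in> att_normal h (PhiM G z)"
    then obtain zk vk where a: "att_conv h zk (PhiM G z)" "vk \<longlonglongrightarrow> v" "\<forall>k. vk k \<in> att_rnormal h (zk k)"
      unfolding att_normal_def by blast
    define yk where "yk k = PsiM G (zk k)" for k
    have c: "att_conv f yk z" using a(1) AC unfolding yk_def by simp
    have "vk k \<in> att_rnormal h (PhiM G (yk k))" for k using a(3) by (simp add: yk_def)
    then have r: "\<forall>k. AT (H (fst (yk k))) (vk k) \<in> att_rnormal f (yk k)"
      using rnormal_h[OF ingph[OF c]] by blast
    have "(\<lambda>k. AT (H (fst (yk k))) (vk k)) \<longlonglongrightarrow> AT (H (fst z)) v"
      by (intro tendsto_AT Hc fstc[OF c] a(2))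
    then show "AT (H (fst z)) v \<in> att_normal f z"
      unfolding att_normal_def using c r by blast
  next
    assume "AT (H (fst z)) v \<in> att_normal f z"
    then obtain zk uk where a: "att_conv f zk z" "uk \<longlonglongrightarrow> AT (H (fst z)) v" "\<forall>k. uk k \<in> att_rnormal f (zk k)"
      unfolding att_normal_def by blast
    define vk where "vk k = AT (- H (fst (zk k))) (uk k)" for k
    have c: "att_conv h (\<lambda>k. PhiM G (zk k)) (PhiM G z)" using a(1) AC' by simp
    have r: "\<forall>k. vk k \<in> att_rnormal h (PhiM G (zk k))"
      using rnormal_h[OF ingph[OF a(1)]] a(3) by (simp add: vk_def)
    have "(\<lambda>k. vk k) \<longlonglongrightarrow> AT (- H (fst z)) (AT (H (fst z)) v)"
      unfolding vk_def by (intro tendsto_AT tendsto_minus Hc fstc[OF a(1)] a(2))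
    then have "vk \<longlonglongrightarrow> v" by simp
    then show "v \<in> att_normal h (PhiM G z)"
      unfolding att_normal_def using c r by blast
  qed
qed

end


lemma proj_ex:
  fixes S :: "'n::finite pt set"
  assumes S: "subspace S"
  shows "\<exists>!p. p \<in> S \<and> z - p \<in> orthogonal_comp S"
proof -
  obtain y w where y: "y \<in> span S" and w: "\<And>v. v \<in> span S \<Longrightarrow> orthogonal w v" and z: "z = y + w"
    using orthogonal_subspace_decomp_exists[of S z] by metis
  have sp: "span S = S" using S by (simp add: span_eq_iff)
  have ex: "y \<in> S \<and> z - y \<in> orthogonal_comp S"
    using y w z sp unfolding orthogonal_comp_def by (auto simp: orthogonal_commute)
  show ?thesis
  proof (rule ex1I[of _ y])
    show "y \<in> S \<and> z - y \<in> orthogonal_comp S" by (fact ex)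
    fix p assume p: "p \<in> S \<and> z - p \<in> orthogonal_comp S"
    have "y - p \<in> S" using p ex S by (simp add: subspace_diff)
    moreover have "y - p = (z - p) - (z - y)" by simp
    then have "y - p \<in> orthogonal_comp S"
      using p ex subspace_orthogonal_comp[of S] by (metis subspace_diff)
    ultimately have "orthogonal (y - p) (y - p)" unfolding orthogonal_comp_def by blast
    then show "p = y" by (simp add: orthogonal_def)
  qed
qed

lemma proj_prop:
  assumes S: "subspace S"
  shows "proj S z \<in> S" "z - proj S z \<in> orthogonal_comp S"
  using theI'[OF proj_ex[OF S, of z]] unfolding proj_def by auto

lemma proj_unique:
  assumes S: "subspace S" and "p \<in> S" "z - p \<in> orthogonal_comp S"
  shows "proj S z = p"
  unfolding proj_def using proj_ex[OF S, of z] assms by (blast intro: the1_equality)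

lemma proj_id: "subspace S \<Longrightarrow> x \<in> S \<Longrightarrow> proj S x = x"
  by (rule proj_unique) (auto simp: orthogonal_comp_def orthogonal_def)

lemma proj_linear:
  assumes S: "subspace S"
  shows "linear (proj S)"
proof (rule linearI)
  note O = subspace_orthogonal_comp[of S]
  fix x y :: "'a pt" and c :: real
  show "proj S (x + y) = proj S x + proj S y"
  proof (rule proj_unique[OF S])
    show "proj S x + proj S y \<in> S" using proj_prop[OF S] S by (simp add: subspace_add)
    have "x + y - (proj S x + proj S y) = (x - proj S x) + (y - proj S y)" by simp
    then show "x + y - (proj S x + proj S y) \<in> orthogonal_comp S"
      using proj_prop[OF S] O by (metis subspace_add)
  qed
  show "proj S (c *\<^sub>R x) = c *\<^sub>R proj S x"
  proof (rule proj_unique[OF S])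
    show "c *\<^sub>R proj S x \<in> S" using proj_prop[OF S] S by (simp add: subspace_scale)
    have "c *\<^sub>R x - c *\<^sub>R proj S x = c *\<^sub>R (x - proj S x)" by (simp add: scaleR_diff_right)
    then show "c *\<^sub>R x - c *\<^sub>R proj S x \<in> orthogonal_comp S"
      using proj_prop[OF S] O by (metis subspace_scale)
  qed
qed

lemma proj_bl: "subspace S \<Longrightarrow> bounded_linear (proj S)"
  using proj_linear linear_conv_bounded_linear by blast

lemma orth_comp_inner: "a \<in> orthogonal_comp S \<Longrightarrow> b \<in> S \<Longrightarrow> a \<bullet> b = 0"
  by (auto simp: orthogonal_comp_def orthogonal_def inner_commute)

lemma proj_pyth:
  assumes S: "subspace S"
  shows "(norm z)\<^sup>2 = (norm (proj S z))\<^sup>2 + (norm (z - proj S z))\<^sup>2"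
proof -
  have "orthogonal (proj S z) (z - proj S z)"
    using proj_prop[OF S, of z] by (auto simp: orthogonal_comp_def)
  then show ?thesis using norm_add_Pythagorean[of "proj S z" "z - proj S z"] by simp
qed

lemma proj_norm_le: "subspace S \<Longrightarrow> norm (proj S z) \<le> norm z"
  using proj_pyth[of S z] by (metis le_add_same_cancel1 norm_ge_zero power2_le_imp_le zero_le_power2)

lemma proj_res_le: "subspace S \<Longrightarrow> norm (z - proj S z) \<le> norm z"
  using proj_pyth[of S z] by (metis le_add_same_cancel2 norm_ge_zero power2_le_imp_le zero_le_power2)

lemma proj_min:
  assumes S: "subspace S" and m: "m \<in> S"
  shows "norm (z - proj S z) \<le> norm (z - m)"
proof -
  have "proj S z - m \<in> S" using proj_prop[OF S] m S by (simp add: subspace_diff)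
  then have "orthogonal (z - proj S z) (proj S z - m)"
    using proj_prop(2)[OF S, of z] by (auto simp: orthogonal_comp_def orthogonal_commute)
  then have "(norm (z - m))\<^sup>2 = (norm (z - proj S z))\<^sup>2 + (norm (proj S z - m))\<^sup>2"
    using norm_add_Pythagorean[of "z - proj S z" "proj S z - m"] by simp
  then show ?thesis by (metis le_add_same_cancel1 norm_ge_zero power2_le_imp_le zero_le_power2)
qed

lemma dist_delta1:
  assumes L: "subspace L" and M: "subspace M" and x: "x \<in> L"
  shows "norm (x - proj M x) \<le> subspace_dist L M * norm x"
proof -
  have bl: "bounded_linear (\<lambda>z. proj L z - proj M z)"
    using proj_bl[OF L] proj_bl[OF M] by (rule bounded_linear_sub)
  have "x - proj M x = proj L x - proj M x" using proj_id[OF L x] by simp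
  then show ?thesis unfolding subspace_dist_def using onorm[OF bl, of x] by simp
qed

lemma dist_delta2:
  assumes L: "subspace L" and M: "subspace M" and x: "x \<in> M"
  shows "norm (x - proj L x) \<le> subspace_dist L M * norm x"
proof -
  have bl: "bounded_linear (\<lambda>z. proj L z - proj M z)"
    using proj_bl[OF L] proj_bl[OF M] by (rule bounded_linear_sub)
  have "norm (x - proj L x) = norm (proj L x - proj M x)" using proj_id[OF M x] by (simp add: norm_minus_commute)
  then show ?thesis unfolding subspace_dist_def using onorm[OF bl, of x] by simp
qed

lemma dist_nonneg: "subspace L \<Longrightarrow> subspace M \<Longrightarrow> subspace_dist L M \<ge> 0"
  unfolding subspace_dist_def
  by (intro onorm_pos_le bounded_linear_sub proj_bl)

lemma delta_dist:
  assumes L: "subspace L" and M: "subspace M" and e1: "e1 \<ge> 0" and e2: "e2 \<ge> 0"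
    and d1: "\<And>x. x \<in> L \<Longrightarrow> norm (x - proj M x) \<le> e1 * norm x"
    and d2: "\<And>y. y \<in> M \<Longrightarrow> norm (y - proj L y) \<le> e2 * norm y"
  shows "subspace_dist L M \<le> e1 + e2"
  unfolding subspace_dist_def
proof (rule onorm_le)
  fix z :: "'a pt"
  interpret PM: linear "proj M" by (rule proj_linear[OF M])
  define a where "a = z - proj L z"
  define b where "b = proj M a"
  have eq: "proj L z - proj M z = (proj L z - proj M (proj L z)) - b"
  proof -
    have "proj M z = proj M (proj L z) + proj M a" unfolding a_def
      by (metis PM.add add_diff_cancel_left' diff_add_cancel)
    then show ?thesis by (simp add: b_def)
  qed
  have n1: "norm (proj L z - proj M (proj L z)) \<le> e1 * norm z"
    using d1[OF proj_prop(1)[OF L, of z]] proj_norm_le[OF L, of z] e1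
    by (meson mult_left_mono order_trans)
  have na: "norm a \<le> norm z" unfolding a_def by (rule proj_res_le[OF L])
  have aL: "a \<in> orthogonal_comp L" unfolding a_def by (rule proj_prop(2)[OF L])
  have bM: "b \<in> M" unfolding b_def by (rule proj_prop(1)[OF M])
  have abM: "a - b \<in> orthogonal_comp M" unfolding b_def by (rule proj_prop(2)[OF M])
  have "(norm b)\<^sup>2 = b \<bullet> b" by (simp add: power2_norm_eq_inner)
  also have "\<dots> = a \<bullet> b"
    using orth_comp_inner[OF abM bM] by (simp add: inner_diff_left)
  also have "\<dots> = a \<bullet> (b - proj L b)"
    using orth_comp_inner[OF aL proj_prop(1)[OF L, of b]] by (simp add: inner_diff_right)
  also have "\<dots> \<le> norm a * norm (b - proj L b)" by (rule Cauchy_Schwarz_ineq2[THEN order_trans[OF abs_ge_self]])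
  also have "\<dots> \<le> norm a * (e2 * norm b)" by (intro mult_left_mono d2 bM) simp
  finally have "(norm b)\<^sup>2 \<le> norm a * (e2 * norm b)" .
  then have nb: "norm b \<le> e2 * norm a"
  proof (cases "norm b = 0")
    case True then show ?thesis using e2 by simp
  next
    case False
    assume "(norm b)\<^sup>2 \<le> norm a * (e2 * norm b)"
    then have "norm b * norm b \<le> (e2 * norm a) * norm b" by (simp add: power2_eq_square algebra_simps)
    then show ?thesis using False by (simp add: mult_le_cancel_right)
  qed
  have "norm (proj L z - proj M z) \<le> norm (proj L z - proj M (proj L z)) + norm b"
    unfolding eq by (rule norm_triangle_ineq4)
  also have "\<dots> \<le> e1 * norm z + e2 * norm z"
    using n1 nb na e2 by (meson add_mono mult_left_mono order_trans)
  finally show "norm (proj L z - proj M z) \<le> (e1 + e2) * norm z" by (simp add: algebra_simps)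
qed


definition KK :: "'n::finite itself \<Rightarrow> real" where "KK _ = real CARD('n) * real CARD('n)"

lemma KK_pos: "KK TYPE('n::finite) > 0" by (simp add: KK_def)

lemma mvb: "norm (M *v u) \<le> KK TYPE('n) * norm M * norm u" for M :: "real^'n::finite^'n"
proof -
  have "onorm ((*v) M) \<le> real CARD('n) * real CARD('n) * norm M"
  proof (rule onorm_le_matrix_component)
    fix i j
    have "\<bar>M $ i $ j\<bar> \<le> norm (M $ i)" by (rule component_le_norm_cart)
    also have "\<dots> \<le> norm M" by (rule Finite_Cartesian_Product.norm_nth_le)
    finally show "\<bar>M $ i $ j\<bar> \<le> norm M" .
  qed
  moreover have "norm (M *v u) \<le> onorm ((*v) M) * norm u" by (rule onorm) simp
  ultimately show ?thesis unfolding KK_def by (meson mult_right_mono norm_ge_zero order_trans)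
qed

lemma nfst: "norm (fst x) \<le> norm x"
  by (cases x) (simp add: norm_fst_le)

lemma norm_0_pair: "norm ((0::'a::real_normed_vector), v) = norm v"
  by (simp add: norm_Pair)

lemma amat_diff: "norm (Amat N' x - Amat N x) \<le> KK TYPE('n) * norm (N' - N) * norm x" for N N' :: "real^'n::finite^'n"
proof -
  have "Amat N' x - Amat N x = (0, (N' - N) *v fst x)"
    by (simp add: Amat_eq matrix_vector_mult_diff_rdistrib)
  then have "norm (Amat N' x - Amat N x) = norm ((N' - N) *v fst x)" by (simp add: norm_0_pair)
  also have "\<dots> \<le> KK TYPE('n) * norm (N' - N) * norm (fst x)" by (rule mvb)
  also have "\<dots> \<le> KK TYPE('n) * norm (N' - N) * norm x"
    using KK_pos[where 'n='n] by (intro mult_left_mono nfst) auto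
  finally show ?thesis .
qed

lemma amat_bound: "norm (Amat N x) \<le> (1 + KK TYPE('n) * norm N) * norm x" for N :: "real^'n::finite^'n"
proof -
  have "Amat N x = x + (0, N *v fst x)" by (cases x) (simp add: Amat_eq)
  then have "norm (Amat N x) \<le> norm x + norm (N *v fst x)"
    using norm_triangle_ineq[of x "(0, N *v fst x)"] by (simp add: norm_0_pair)
  also have "\<dots> \<le> norm x + KK TYPE('n) * norm N * norm x"
  proof -
    have "KK TYPE('n) * norm N * norm (fst x) \<le> KK TYPE('n) * norm N * norm x"
      using KK_pos[where 'n='n] nfst[of x] by (intro mult_left_mono) auto
    then show ?thesis using mvb[of N "fst x"] by linarith
  qed
  finally show ?thesis by (simp add: algebra_simps)
qed

lemma amat_lower: "norm x \<le> (1 + KK TYPE('n) * norm N) * norm (Amat N x)" for N :: "real^'n::finite^'n"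
  using amat_bound[of "-N" "Amat N x"] by simp

lemma sc_cont:
  fixes N :: "real^'n::finite^'n" and Nk :: "nat \<Rightarrow> real^'n^'n"
  assumes L: "subspace L" and Lk: "\<And>k. subspace (Lk k)" and N: "Nk \<longlonglongrightarrow> N"
    and d: "(\<lambda>k. subspace_dist L (Lk k)) \<longlonglongrightarrow> 0"
  shows "(\<lambda>k. subspace_dist (Amat N ` L) (Amat (Nk k) ` Lk k)) \<longlonglongrightarrow> 0"
proof -
  define K where "K = KK TYPE('n)"
  have K: "K > 0" unfolding K_def by (rule KK_pos)
  define C where "C = 1 + K * (norm N + 1)"
  have C: "C \<ge> 1" using K by (simp add: C_def)
  define ep where "ep k = K * norm (Nk k - N)" for k
  define dk where "dk k = subspace_dist L (Lk k)" for k
  define ek where "ek k = C * (ep k + C * dk k)" for k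
  have ep0: "ep \<longlonglongrightarrow> 0"
  proof -
    have "(\<lambda>k. norm (Nk k - N)) \<longlonglongrightarrow> 0" using N by (simp add: LIM_zero_iff tendsto_norm_zero)
    then show ?thesis unfolding ep_def using tendsto_mult_right_zero by blast
  qed
  have ek0: "ek \<longlonglongrightarrow> 0"
  proof -
    have "(\<lambda>k. C * (ep k + C * dk k)) \<longlonglongrightarrow> C * (0 + C * 0)"
      unfolding dk_def by (intro tendsto_intros ep0 d)
    then show ?thesis unfolding ek_def by simp
  qed
  have evN: "eventually (\<lambda>k. norm (Nk k) \<le> norm N + 1) sequentially"
  proof -
    have "eventually (\<lambda>k. dist (Nk k) N < 1) sequentially" using N by (simp add: tendsto_iff)
    then show ?thesis
    proof eventually_elim
      case (elim k)
      then have "norm (Nk k - N) < 1" by (simp add: dist_norm)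
      moreover have "norm (Nk k) - norm N \<le> norm (Nk k - N)" by (rule norm_triangle_ineq2)
      ultimately show ?case by linarith
    qed
  qed
  have lin: "\<And>M. linear (Amat M)" by (rule Amat_linear)
  have AL: "subspace (Amat N ` L)" using L by (intro linear_subspace_image lin)
  have ALk: "\<And>k. subspace (Amat (Nk k) ` Lk k)" using Lk by (intro linear_subspace_image lin)
  have CN: "1 + K * norm N \<le> C" using K by (simp add: C_def)
  have "eventually (\<lambda>k. norm (subspace_dist (Amat N ` L) (Amat (Nk k) ` Lk k)) \<le> 2 * ek k) sequentially"
    using evN
  proof eventually_elim
    case (elim k)
    have CNk: "1 + K * norm (Nk k) \<le> C" using elim K by (simp add: C_def)
    have dk0: "dk k \<ge> 0" unfolding dk_def by (rule dist_nonneg[OF L Lk])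
    have ep0: "ep k \<ge> 0" using K by (simp add: ep_def)
    have ek0: "ek k \<ge> 0" using C dk0 ep0 by (simp add: ek_def)
    have d1: "norm (y - proj (Amat (Nk k) ` Lk k) y) \<le> ek k * norm y" if y: "y \<in> Amat N ` L" for y
    proof -
      obtain x where x: "x \<in> L" "y = Amat N x" using y by blast
      have px: "proj (Lk k) x \<in> Lk k" by (rule proj_prop(1)[OF Lk])
      have "norm (y - proj (Amat (Nk k) ` Lk k) y) \<le> norm (y - Amat (Nk k) (proj (Lk k) x))"
        using px by (intro proj_min[OF ALk]) blast
      also have "y - Amat (Nk k) (proj (Lk k) x) = (Amat N x - Amat (Nk k) x) + Amat (Nk k) (x - proj (Lk k) x)"
        using x by (simp add: linear_diff[OF lin])
      also have "norm \<dots> \<le> norm (Amat N x - Amat (Nk k) x) + norm (Amat (Nk k) (x - proj (Lk k) x))"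
        by (rule norm_triangle_ineq)
      also have "\<dots> \<le> ep k * norm x + C * (dk k * norm x)"
      proof (rule add_mono)
        show "norm (Amat N x - Amat (Nk k) x) \<le> ep k * norm x"
          using amat_diff[where N'=N and N="Nk k" and x=x] by (simp add: ep_def K_def norm_minus_commute)
        have "norm (Amat (Nk k) (x - proj (Lk k) x)) \<le> (1 + K * norm (Nk k)) * norm (x - proj (Lk k) x)"
          using amat_bound unfolding K_def by blast
        also have "\<dots> \<le> C * (dk k * norm x)"
          using dist_delta1[OF L Lk x(1), of k] CNk K C unfolding dk_def
          by (intro mult_mono) auto
        finally show "norm (Amat (Nk k) (x - proj (Lk k) x)) \<le> C * (dk k * norm x)" .
      qed
      also have "\<dots> = (ep k + C * dk k) * norm x" by (simp add: algebra_simps)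
      also have "\<dots> \<le> (ep k + C * dk k) * (C * norm y)"
      proof -
        have "norm x \<le> (1 + K * norm N) * norm y" using amat_lower x(2) unfolding K_def by blast
        also have "\<dots> \<le> C * norm y" using CN by (intro mult_right_mono) auto
        finally show ?thesis using ep0 dk0 C by (intro mult_left_mono) auto
      qed
      also have "\<dots> = ek k * norm y" by (simp add: ek_def algebra_simps)
      finally show ?thesis .
    qed
    have d2: "norm (y - proj (Amat N ` L) y) \<le> ek k * norm y" if y: "y \<in> Amat (Nk k) ` Lk k" for y
    proof -
      obtain x where x: "x \<in> Lk k" "y = Amat (Nk k) x" using y by blast
      have px: "proj L x \<in> L" by (rule proj_prop(1)[OF L])
      have "norm (y - proj (Amat N ` L) y) \<le> norm (y - Amat N (proj L x))"
        using px by (intro proj_min[OF AL]) blast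
      also have "y - Amat N (proj L x) = (Amat (Nk k) x - Amat N x) + Amat N (x - proj L x)"
        using x by (simp add: linear_diff[OF lin])
      also have "norm \<dots> \<le> norm (Amat (Nk k) x - Amat N x) + norm (Amat N (x - proj L x))"
        by (rule norm_triangle_ineq)
      also have "\<dots> \<le> ep k * norm x + C * (dk k * norm x)"
      proof (rule add_mono)
        show "norm (Amat (Nk k) x - Amat N x) \<le> ep k * norm x"
          using amat_diff[where N'="Nk k" and N=N and x=x] by (simp add: ep_def K_def)
        have "norm (Amat N (x - proj L x)) \<le> (1 + K * norm N) * norm (x - proj L x)"
          using amat_bound unfolding K_def by blast
        also have "\<dots> \<le> C * (dk k * norm x)"
          using dist_delta2[OF L Lk x(1)] CN K C unfolding dk_def
          by (intro mult_mono) auto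
        finally show "norm (Amat N (x - proj L x)) \<le> C * (dk k * norm x)" .
      qed
      also have "\<dots> = (ep k + C * dk k) * norm x" by (simp add: algebra_simps)
      also have "\<dots> \<le> (ep k + C * dk k) * (C * norm y)"
      proof -
        have "norm x \<le> (1 + K * norm (Nk k)) * norm y" using amat_lower x(2) unfolding K_def by blast
        also have "\<dots> \<le> C * norm y" using CNk by (intro mult_right_mono) auto
        finally show ?thesis using ep0 dk0 C by (intro mult_left_mono) auto
      qed
      also have "\<dots> = ek k * norm y" by (simp add: ek_def algebra_simps)
      finally show ?thesis .
    qed
    have "subspace_dist (Amat N ` L) (Amat (Nk k) ` Lk k) \<le> ek k + ek k"
      by (rule delta_dist[OF AL ALk ek0 ek0 d1 d2])
    moreover have "subspace_dist (Amat N ` L) (Amat (Nk k) ` Lk k) \<ge> 0" by (rule dist_nonneg[OF AL ALk])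
    ultimately show ?case by simp
  qed
  moreover have "(\<lambda>k. 2 * ek k) \<longlonglongrightarrow> 0" using tendsto_mult_right_zero[OF ek0, of 2] by simp
  ultimately show ?thesis by (rule Lim_null_comparison)
qed


lemma Amat_img_inv[simp]: "Amat (-N) ` (Amat N ` L) = L"
  by (simp add: image_image)

lemma Znn_image: "L \<in> Znn \<Longrightarrow> Amat N ` L \<in> Znn"
proof -
  assume L: "L \<in> Znn"
  then have sL: "subspace L" and dL: "dim L = CARD('a)" by (auto simp: Znn_def)
  have s: "subspace (Amat N ` L)" by (intro linear_subspace_image Amat_linear sL)
  have "dim (Amat N ` L) \<le> dim L" by (rule dim_image_le[OF Amat_linear])
  moreover have "dim L \<le> dim (Amat N ` L)"
    using dim_image_le[OF Amat_linear, of "-N" "Amat N ` L"] by simp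
  ultimately show ?thesis using s dL by (simp add: Znn_def)
qed

lemma Znn_image_iff: "Amat N ` L \<in> Znn \<longleftrightarrow> L \<in> Znn"
  using Znn_image[of L N] Znn_image[of "Amat N ` L" "-N"] by auto

lemma orth_image_iff: "p \<in> orthogonal_comp (Amat M ` L) \<longleftrightarrow> AT M p \<in> orthogonal_comp L"
  unfolding orthogonal_comp_def orthogonal_def
  by (auto simp: inner_commute[of "Amat M _"] Amat_dot inner_commute[of _ "AT M p"])

lemma adj_image:
  assumes sym: "transpose M = M"
  shows "adj_subspace (Amat M ` L) = Amat M ` adj_subspace L"
  unfolding adj_subspace_def by (rule coD_transfer[OF orth_image_iff sym])

context
  fixes f :: "real^'n::finite \<Rightarrow> ereal" and g :: "real^'n \<Rightarrow> real" and G :: "real^'n \<Rightarrow> real^'n"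
    and H :: "real^'n \<Rightarrow> real^'n^'n" and h :: "real^'n \<Rightarrow> ereal"
  assumes f_range: "\<forall>x. f x \<noteq> -\<infinity>"
    and grad: "\<forall>x. (g has_derivative (\<lambda>v. G x \<bullet> v)) (at x)"
    and hess: "\<forall>x. (G has_derivative (\<lambda>v. H x *v v)) (at x)"
    and hess_cont: "continuous_on UNIV H"
    and h_def: "h = (\<lambda>x. f x + ereal (g x))"
begin

lemma Oset_h: "y \<in> gph_subdiff f \<Longrightarrow> PhiM G y \<in> O_set h \<longleftrightarrow> y \<in> O_set f"
  unfolding O_set_def
  using gph_h'[OF f_range grad hess hess_cont h_def, of y] tangent_h[OF f_range grad hess hess_cont h_def, of y]
  by (simp add: Znn_image_iff)

lemma SC_h:
  assumes z: "z \<in> gph_subdiff f"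
  shows "SC h (PhiM G z) = {Amat (H (fst z)) ` L | L. L \<in> SC f z}"
proof -
  note fin = gph_fin[OF f_range grad hess hess_cont h_def z]
  note AC = att_conv_h[OF f_range grad hess hess_cont h_def fin]
  note AC' = att_conv_h'[OF f_range grad hess hess_cont h_def fin]
  note TH = tangent_h[OF f_range grad hess hess_cont h_def]
  have Hc: "\<And>xk x. xk \<longlonglongrightarrow> x \<Longrightarrow> (\<lambda>k. H (xk k)) \<longlonglongrightarrow> H x"
    using isCont_tendsto_compose[OF H_cont[OF f_range grad hess hess_cont h_def]] by blast
  have fstc: "\<And>zk. att_conv f zk z \<Longrightarrow> (\<lambda>k. fst (zk k)) \<longlonglongrightarrow> fst z"
    unfolding att_conv_def by (blast intro: tendsto_fst)
  have ingph: "\<And>zk k. att_conv f zk z \<Longrightarrow> zk k \<in> gph_subdiff f"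
    unfolding att_conv_def by blast
  define M where "M = H (fst z)"
  show ?thesis
  proof (intro equalityI subsetI)
    fix L' assume "L' \<in> SC h (PhiM G z)"
    then obtain zk where L': "L' \<in> Znn" and O: "\<forall>k. zk k \<in> O_set h" and c: "att_conv h zk (PhiM G z)"
      and d: "(\<lambda>k. subspace_dist L' (att_tangent h (zk k))) \<longlonglongrightarrow> 0"
      unfolding SC_def by blast
    define yk where "yk k = PsiM G (zk k)" for k
    have cy: "att_conv f yk z" using c AC unfolding yk_def by simp
    have zk: "zk k = PhiM G (yk k)" for k by (simp add: yk_def)
    have Oy: "yk k \<in> O_set f" for k using O Oset_h[OF ingph[OF cy, of k]] zk by metis
    have Th: "att_tangent h (zk k) = Amat (H (fst (yk k))) ` att_tangent f (yk k)" for k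
      using TH[OF ingph[OF cy, of k]] zk by simp
    have sub: "subspace (att_tangent h (zk k))" for k using O by (simp add: O_set_def Znn_def)
    have sL': "subspace L'" using L' by (simp add: Znn_def)
    have "(\<lambda>k. subspace_dist (Amat (-M) ` L') (Amat (- H (fst (yk k))) ` att_tangent h (zk k))) \<longlonglongrightarrow> 0"
      unfolding M_def by (rule sc_cont[OF sL' sub]) (intro tendsto_minus Hc fstc[OF cy], rule d)
    then have "(\<lambda>k. subspace_dist (Amat (-M) ` L') (att_tangent f (yk k))) \<longlonglongrightarrow> 0"
      by (simp add: Th)
    then have "Amat (-M) ` L' \<in> SC f z"
      unfolding SC_def using Oy cy L' Znn_image by blast
    moreover have "L' = Amat M ` (Amat (-M) ` L')" using Amat_img_inv[of "-M" L'] by simp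
    ultimately show "L' \<in> {Amat (H (fst z)) ` L | L. L \<in> SC f z}" unfolding M_def by blast
  next
    fix L' assume "L' \<in> {Amat (H (fst z)) ` L | L. L \<in> SC f z}"
    then obtain L where L': "L' = Amat M ` L" and "L \<in> SC f z" unfolding M_def by blast
    then obtain yk where L: "L \<in> Znn" and O: "\<forall>k. yk k \<in> O_set f" and c: "att_conv f yk z"
      and d: "(\<lambda>k. subspace_dist L (att_tangent f (yk k))) \<longlonglongrightarrow> 0"
      unfolding SC_def by blast
    define zk where "zk k = PhiM G (yk k)" for k
    have cz: "att_conv h zk (PhiM G z)" using c AC' unfolding zk_def by simp
    have Oz: "zk k \<in> O_set h" for k using O Oset_h[OF ingph[OF c, of k]] unfolding zk_def by blast
    have Th: "att_tangent h (zk k) = Amat (H (fst (yk k))) ` att_tangent f (yk k)" for k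
      using TH[OF ingph[OF c, of k]] unfolding zk_def by simp
    have sub: "subspace (att_tangent f (yk k))" for k using O by (simp add: O_set_def Znn_def)
    have sL: "subspace L" using L by (simp add: Znn_def)
    have "(\<lambda>k. subspace_dist (Amat M ` L) (Amat (H (fst (yk k))) ` att_tangent f (yk k))) \<longlonglongrightarrow> 0"
      unfolding M_def by (rule sc_cont[OF sL sub]) (intro Hc fstc[OF c], rule d)
    then have "(\<lambda>k. subspace_dist L' (att_tangent h (zk k))) \<longlonglongrightarrow> 0"
      by (simp add: Th L')
    then show "L' \<in> SC h (PhiM G z)"
      unfolding SC_def using Oz cz L L' Znn_image by blast
  qed
qed

end


theorem proposition3p2:
  fixes f :: "real^'n \<Rightarrow> ereal" and g :: "real^'n \<Rightarrow> real"
    and G :: "real^'n \<Rightarrow> real^'n" and H :: "real^'n \<Rightarrow> real^'n^'n"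
    and xb xbs :: "real^'n" and h :: "real^'n \<Rightarrow> ereal"
  assumes f_range: "\<forall>x. f x \<noteq> -\<infinity>"
    and gph: "(xb, xbs) \<in> gph_subdiff f"
    and grad: "\<forall>x. (g has_derivative (\<lambda>v. G x \<bullet> v)) (at x)"
    and hess: "\<forall>x. (G has_derivative (\<lambda>v. H x *v v)) (at x)"
    and hess_cont: "continuous_on UNIV H"
    and h_def: "h = (\<lambda>x. f x + ereal (g x))"
  shows "att_tangent h (xb, xbs + G xb) = Amat (H xb) ` att_tangent f (xb, xbs)
    \<and> att_rnormal h (xb, xbs + G xb) = inv (adjoint (Amat (H xb))) ` att_rnormal f (xb, xbs)
    \<and> att_normal h (xb, xbs + G xb) = inv (adjoint (Amat (H xb))) ` att_normal f (xb, xbs)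
    \<and> gph_D h (xb, xbs + G xb) = Amat (H xb) ` gph_D f (xb, xbs)
    \<and> gph_rcoD h (xb, xbs + G xb) = Amat (H xb) ` gph_rcoD f (xb, xbs)
    \<and> gph_coD h (xb, xbs + G xb) = Amat (H xb) ` gph_coD f (xb, xbs)
    \<and> SC h (xb, xbs + G xb) = {Amat (H xb) ` L | L. L \<in> SC f (xb, xbs)}
    \<and> SC_star h (xb, xbs + G xb) = {Amat (H xb) ` adj_subspace L | L. L \<in> SC f (xb, xbs)}"
proof -
  define z where "z = (xb, xbs)"
  have P: "(xb, xbs + G xb) = PhiM G z" by (simp add: z_def PhiM_def)
  have z: "z \<in> gph_subdiff f" using gph by (simp add: z_def)
  have fz: "fst z = xb" by (simp add: z_def)
  have sym: "transpose (H xb) = H xb"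
    by (rule hess_sym[OF grad hess[rule_format]])
  note A = f_range grad hess hess_cont h_def
  have T: "att_tangent h (PhiM G z) = Amat (H xb) ` att_tangent f z"
    using tangent_h[OF A z] fz by simp
  have RN: "att_rnormal h (PhiM G z) = inv (adjoint (Amat (H xb))) ` att_rnormal f z"
    unfolding inv_adjoint_Amat by (rule set_eqI) (simp add: AT_image_iff rnormal_h[OF A z] fz)
  have NN: "att_normal h (PhiM G z) = inv (adjoint (Amat (H xb))) ` att_normal f z"
    unfolding inv_adjoint_Amat by (rule set_eqI) (simp add: AT_image_iff normal_h[OF A z] fz)
  have RC: "gph_rcoD h (PhiM G z) = Amat (H xb) ` gph_rcoD f z"
    unfolding gph_rcoD_def by (rule coD_transfer[OF _ sym]) (use rnormal_h[OF A z] fz in simp)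
  have CC: "gph_coD h (PhiM G z) = Amat (H xb) ` gph_coD f z"
    unfolding gph_coD_def by (rule coD_transfer[OF _ sym]) (use normal_h[OF A z] fz in simp)
  have S: "SC h (PhiM G z) = {Amat (H xb) ` L | L. L \<in> SC f z}"
    using SC_h[OF A z] fz by simp
  have SS: "SC_star h (PhiM G z) = {Amat (H xb) ` adj_subspace L | L. L \<in> SC f z}"
  proof (intro equalityI subsetI)
    fix K assume "K \<in> SC_star h (PhiM G z)"
    then show "K \<in> {Amat (H xb) ` adj_subspace L | L. L \<in> SC f z}"
      unfolding SC_star_def S by (auto simp: adj_image[OF sym])
  next
    fix K assume "K \<in> {Amat (H xb) ` adj_subspace L | L. L \<in> SC f z}"
    then obtain L where K: "K = Amat (H xb) ` adj_subspace L" and L: "L \<in> SC f z" by blast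
    then have "K = adj_subspace (Amat (H xb) ` L)" by (simp add: adj_image[OF sym])
    moreover have "Amat (H xb) ` L \<in> SC h (PhiM G z)" unfolding S using L by blast
    ultimately show "K \<in> SC_star h (PhiM G z)" unfolding SC_star_def by blast
  qed
  show ?thesis unfolding P using T RN NN RC CC S SS by (simp add: gph_D_def z_def)
qed


end
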